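(* Let $X,Y,Z$ be Dedekind complete Riesz spaces; all maps below are order continuous and increasing, and $f^{s}$ denotes the unique left order continuous increasing extension of $f$ to the sup-completions. (i) If $f,g:X\to Y$ satisfy $f\le g$, then $f^{s}\le g^{s}$. (ii) If $f,g,h:X\to Y$ satisfy $h=f+g$, then $h^{s}=f^{s}+g^{s}$. (iii) If $f:X\to Y$ and $g:Y\to Z$, then $(g\circ f)^{s}=g^{s}\circ f^{s}$.
   Context: For a Dedekind complete Riesz space $X$, its sup-completion $X^{s}$ is the set of classes of nonempty upward directed subsets of $X$ under $A\sim B$ iff $\sup_{a\in A}(x\wedge a)=\sup_{b\in B}(x\wedge b)$ for all $x\in X$, with induced addition, nonnegative scalar multiplication and order; $X\subseteq X^{s}$, every nonempty subset of $X^s$ has a supremum and every element is the supremum of an increasing net from $X$. A map $F$ is left order continuous if $x_\alpha\uparrow x$ implies $F(x_\alpha)\uparrow F(x)$. Every order continuous increasing map $f:X\to Y$ has a unique left order continuous increasing extension $f^s:X^s\to Y^s$. *)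

theory Defs
  imports Complex_Main
begin

text \<open>A Riesz space is an ordered real vector space which is a lattice; it is
Dedekind complete iff every nonempty order-bounded-above set has a supremum,
which is exactly the class conditionally_complete_lattice.\<close>

class dc_riesz = ordered_real_vector + conditionally_complete_lattice

definition up_directed :: "'a::ord set \<Rightarrow> bool" where
  "up_directed A \<longleftrightarrow> A \<noteq> {} \<and> (\<forall>a\<in>A. \<forall>b\<in>A. \<exists>c\<in>A. a \<le> c \<and> b \<le> c)"

definition down_directed :: "'a::ord set \<Rightarrow> bool" where
  "down_directed A \<longleftrightarrow> A \<noteq> {} \<and> (\<forall>a\<in>A. \<forall>b\<in>A. \<exists>c\<in>A. c \<le> a \<and> c \<le> b)"

definition is_sup :: "'a::ord set \<Rightarrow> 'a \<Rightarrow> bool" where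
  "is_sup S x \<longleftrightarrow> (\<forall>s\<in>S. s \<le> x) \<and> (\<forall>y. (\<forall>s\<in>S. s \<le> y) \<longrightarrow> x \<le> y)"

definition is_inf :: "'a::ord set \<Rightarrow> 'a \<Rightarrow> bool" where
  "is_inf S x \<longleftrightarrow> (\<forall>s\<in>S. x \<le> s) \<and> (\<forall>y. (\<forall>s\<in>S. y \<le> s) \<longrightarrow> y \<le> x)"

text \<open>An increasing net x_alpha with x_alpha increasing to x is represented by its
range, an upward directed set with supremum x (and conversely every upward
directed set is an increasing net indexed by itself).\<close>

definition left_order_continuous :: "('a::ord \<Rightarrow> 'b::ord) \<Rightarrow> bool" where
  "left_order_continuous F \<longleftrightarrow>
     (\<forall>D x. up_directed D \<and> is_sup D x \<longrightarrow> is_sup (F ` D) (F x))"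

definition order_continuous :: "('a::ord \<Rightarrow> 'b::ord) \<Rightarrow> bool" where
  "order_continuous F \<longleftrightarrow>
     (\<forall>D x. up_directed D \<and> is_sup D x \<longrightarrow> is_sup (F ` D) (F x)) \<and>
     (\<forall>D x. down_directed D \<and> is_inf D x \<longrightarrow> is_inf (F ` D) (F x))"

definition supc_rel :: "'a::dc_riesz set \<Rightarrow> 'a set \<Rightarrow> bool" where
  "supc_rel A B \<longleftrightarrow> up_directed A \<and> up_directed B \<and>
     (\<forall>x. Sup ((\<lambda>a. inf x a) ` A) = Sup ((\<lambda>b. inf x b) ` B))"

lemma supc_rel_part_equivp: "part_equivp (supc_rel :: 'a::dc_riesz set \<Rightarrow> 'a set \<Rightarrow> bool)"
proof (rule part_equivpI)
  show "\<exists>x. supc_rel x (x :: 'a set)"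
    by (rule exI[of _ "{0}"]) (simp add: supc_rel_def up_directed_def)
  show "symp (supc_rel :: 'a set \<Rightarrow> _)"
    by (rule sympI) (auto simp: supc_rel_def)
  show "transp (supc_rel :: 'a set \<Rightarrow> _)"
    by (rule transpI) (auto simp: supc_rel_def)
qed

quotient_type (overloaded) 'a supc = "'a::dc_riesz set" / partial: supc_rel
  morphisms rep_supc abs_supc
  by (rule supc_rel_part_equivp)

definition emb :: "'a::dc_riesz \<Rightarrow> 'a supc" where
  "emb x = abs_supc {x}"

instantiation supc :: (dc_riesz) ord
begin
definition less_eq_supc :: "'a supc \<Rightarrow> 'a supc \<Rightarrow> bool" where
  "less_eq_supc p q \<longleftrightarrow>
     (\<forall>x. Sup ((\<lambda>a. inf x a) ` rep_supc p) \<le> Sup ((\<lambda>b. inf x b) ` rep_supc q))"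
definition less_supc :: "'a supc \<Rightarrow> 'a supc \<Rightarrow> bool" where
  "less_supc p q \<longleftrightarrow> p \<le> q \<and> \<not> q \<le> p"
instance ..
end

instantiation supc :: (dc_riesz) plus
begin
definition plus_supc :: "'a supc \<Rightarrow> 'a supc \<Rightarrow> 'a supc" where
  "plus_supc p q = abs_supc {a + b | a b. a \<in> rep_supc p \<and> b \<in> rep_supc q}"
instance ..
end

definition supc_ext :: "('a::dc_riesz \<Rightarrow> 'b::dc_riesz) \<Rightarrow> 'a supc \<Rightarrow> 'b supc" where
  "supc_ext f = (THE F. (\<forall>x. F (emb x) = emb (f x)) \<and> (\<forall>p q. p \<le> q \<longrightarrow> F p \<le> F q) \<and> left_order_continuous F)"

end

theory Submission
  imports Defs "HOL-Library.Lattice_Algebras"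
begin

subclass (in dc_riesz) lattice_ab_group_add ..

lemma bdd_inf: "bdd_above (inf (x::'a::dc_riesz) ` S)"
  by (rule bdd_aboveI[of _ x]) auto

lemma inf_Sup_dist:
  fixes S :: "'a::dc_riesz set"
  assumes ne: "S \<noteq> {}" and bdd: "bdd_above S"
  shows "inf y (Sup S) = Sup (inf y ` S)"
proof (rule antisym)
  show "Sup (inf y ` S) \<le> inf y (Sup S)"
  proof (rule cSUP_least[OF ne])
    fix s assume "s \<in> S" then show "inf y s \<le> inf y (Sup S)"
      by (intro inf_mono order_refl cSup_upper bdd)
  qed
next
  define u where "u = Sup (inf y ` S)"
  have "s \<le> u + sup y (Sup S) - y" if "s \<in> S" for s
  proof -
    have "s = sup y s + inf y s - y" using add_eq_inf_sup[of y s] by (simp add: algebra_simps)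
    also have "\<dots> \<le> sup y (Sup S) + u - y"
    proof -
      have h1: "sup y s \<le> sup y (Sup S)" using that bdd by (intro sup_mono order_refl cSup_upper)
      have h2: "inf y s \<le> u" unfolding u_def using that by (intro cSUP_upper bdd_inf)
      show ?thesis using add_mono[OF h1 h2] by (rule diff_right_mono)
    qed
    finally show ?thesis by (simp add: algebra_simps)
  qed
  then have A: "Sup S \<le> u + sup y (Sup S) - y" using ne by (intro cSup_least) auto
  define c where "c = sup y (Sup S)"
  have B: "y + Sup S = c + inf y (Sup S)" unfolding c_def by (rule add_eq_inf_sup)
  have "Sup S + (y - c) \<le> (u + c - y) + (y - c)" using A unfolding c_def[symmetric] by (rule add_right_mono)
  also have "\<dots> = u" by (simp add: algebra_simps)
  finally have "Sup S + (y - c) \<le> u" .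
  moreover have "Sup S + (y - c) = inf y (Sup S)"
  proof -
    have "Sup S + (y - c) = (y + Sup S) - c" by (simp add: algebra_simps)
    also have "\<dots> = inf y (Sup S)" unfolding B by simp
    finally show ?thesis .
  qed
  ultimately show "inf y (Sup S) \<le> Sup (inf y ` S)" by (simp add: u_def)
qed

lemma is_sup_cSup: "(S::'a::dc_riesz set) \<noteq> {} \<Longrightarrow> bdd_above S \<Longrightarrow> is_sup S (Sup S)"
  unfolding is_sup_def by (auto intro: cSup_upper cSup_least)

lemma is_sup_unique: "is_sup S (x::'a::order) \<Longrightarrow> is_sup S y \<Longrightarrow> x = y"
  unfolding is_sup_def by (auto intro: antisym)

definition upc :: "('a::ord \<Rightarrow> 'b::ord) \<Rightarrow> bool" where
  "upc F \<longleftrightarrow> (\<forall>D x. up_directed D \<and> is_sup D x \<longrightarrow> is_sup (F ` D) (F x))"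

lemma up_directed_image: "mono f \<Longrightarrow> up_directed A \<Longrightarrow> up_directed (f ` A)"
  unfolding up_directed_def by (auto dest: monoD) (meson monoD)

lemma lemL:
  fixes a :: "'a::dc_riesz" and \<phi> :: "'a \<Rightarrow> 'b::dc_riesz"
  assumes m: "mono \<phi>" and c: "upc \<phi>" and B: "up_directed B" and a: "Sup (inf a ` B) = a"
  shows "inf y (\<phi> a) \<le> Sup (inf y ` \<phi> ` B)"
proof -
  have Bne: "B \<noteq> {}" using B by (simp add: up_directed_def)
  have "up_directed (inf a ` B)"
    by (rule up_directed_image[OF _ B]) (intro monoI inf_mono order_refl)
  moreover have "is_sup (inf a ` B) a" using is_sup_cSup[of "inf a ` B"] Bne a by (simp add: bdd_inf)
  ultimately have "is_sup (\<phi> ` inf a ` B) (\<phi> a)" using c by (simp add: upc_def)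
  moreover have "is_sup (\<phi> ` inf a ` B) (Sup (\<phi> ` inf a ` B))"
  proof (rule is_sup_cSup)
    show "bdd_above (\<phi> ` inf a ` B)" by (rule bdd_aboveI[of _ "\<phi> a"]) (auto intro: monoD[OF m])
  qed (use Bne in auto)
  ultimately have eq: "\<phi> a = Sup (\<phi> ` inf a ` B)" by (rule is_sup_unique)
  have "inf y (\<phi> a) = Sup (inf y ` \<phi> ` inf a ` B)"
    unfolding eq
    by (rule inf_Sup_dist) (use Bne in \<open>auto intro!: bdd_aboveI[of _ "\<phi> a"] monoD[OF m]\<close>)
  also have "\<dots> \<le> Sup (inf y ` \<phi> ` B)"
    unfolding image_image
  proof (rule cSUP_mono)
    show "B \<noteq> {}" by fact
    show "bdd_above ((\<lambda>x. inf y (\<phi> x)) ` B)" by (rule bdd_aboveI[of _ y]) auto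
    fix n assume "n \<in> B" then show "\<exists>m\<in>B. inf y (\<phi> (inf a n)) \<le> inf y (\<phi> m)"
      by (intro bexI[of _ n] inf_mono order_refl monoD[OF m]) auto
  qed
  finally show ?thesis .
qed


definition les :: "'a::dc_riesz set \<Rightarrow> 'a set \<Rightarrow> bool" where
  "les A B \<longleftrightarrow> (\<forall>x. Sup (inf x ` A) \<le> Sup (inf x ` B))"

lemma les_refl: "les A A" by (simp add: les_def)
lemma les_trans: "les A B \<Longrightarrow> les B C \<Longrightarrow> les A C"
  unfolding les_def by (meson order_trans)

lemma Sup_inf_upper: "b \<in> B \<Longrightarrow> inf (x::'a::dc_riesz) b \<le> Sup (inf x ` B)"
  by (rule cSUP_upper[OF _ bdd_inf])

lemma les_I: "A \<noteq> {} \<Longrightarrow> (\<And>x a. a \<in> A \<Longrightarrow> inf x a \<le> Sup (inf x ` B)) \<Longrightarrow> les A B"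
  unfolding les_def by (auto intro!: cSUP_least)

lemma les_D: "les A B \<Longrightarrow> a \<in> A \<Longrightarrow> inf x a \<le> Sup (inf x ` B)"
  unfolding les_def by (meson Sup_inf_upper order_trans)

lemma les_subset: "A \<noteq> {} \<Longrightarrow> A \<subseteq> B \<Longrightarrow> les A B"
  by (rule les_I) (auto intro: Sup_inf_upper)

lemma Sup_self: "a \<in> A \<Longrightarrow> Sup (inf a ` A) = (a::'a::dc_riesz)"
  by (rule cSup_eq_maximum) (use image_eqI[of a "inf a" a A] in auto)

lemma les_elem: "les A B \<Longrightarrow> a \<in> A \<Longrightarrow> B \<noteq> {} \<Longrightarrow> Sup (inf a ` B) = (a::'a::dc_riesz)"
proof (rule antisym)
  assume "B \<noteq> {}" then show "Sup (inf a ` B) \<le> a" by (intro cSUP_least) auto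
next
  assume "les A B" "a \<in> A"
  then show "a \<le> Sup (inf a ` B)" using Sup_self[of a A] unfolding les_def by metis
qed

lemma up_ne: "up_directed A \<Longrightarrow> A \<noteq> {}" by (simp add: up_directed_def)

lemma les_image:
  fixes \<phi> :: "'a::dc_riesz \<Rightarrow> 'b::dc_riesz"
  assumes m: "mono \<phi>" and c: "upc \<phi>" and A: "up_directed A" and B: "up_directed B" and l: "les A B"
  shows "les (\<phi> ` A) (\<phi> ` B)"
proof (rule les_I)
  show "\<phi> ` A \<noteq> {}" using up_ne[OF A] by simp
  fix y b assume "b \<in> \<phi> ` A"
  then obtain a where a: "a \<in> A" "b = \<phi> a" by auto
  show "inf y b \<le> Sup (inf y ` \<phi> ` B)"
    unfolding a(2) by (rule lemL[OF m c B les_elem[OF l a(1) up_ne[OF B]]])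
qed

lemma supc_rel_iff: "supc_rel A B \<longleftrightarrow> up_directed A \<and> up_directed B \<and> les A B \<and> les B A"
  unfolding supc_rel_def les_def by (auto intro: antisym)

lemma rep_dir: "up_directed (rep_supc p)"
  using Quotient3_rel_rep[OF Quotient3_supc, of p p] by (simp add: supc_rel_def)

lemma rep_abs: "up_directed S \<Longrightarrow> supc_rel (rep_supc (abs_supc S)) S"
  using Quotient3_rel[OF Quotient3_supc, of "rep_supc (abs_supc S)" S]
    Quotient3_rel_rep[OF Quotient3_supc, of "abs_supc S" "abs_supc S"]
    Quotient3_abs_rep[OF Quotient3_supc, of "abs_supc S"]
  by (simp add: supc_rel_def)

lemma le_supc_iff: "p \<le> q \<longleftrightarrow> les (rep_supc p) (rep_supc q)"
  by (simp add: less_eq_supc_def les_def)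

lemma abs_le_abs: "up_directed S \<Longrightarrow> up_directed T \<Longrightarrow> abs_supc S \<le> abs_supc T \<longleftrightarrow> les S T"
  unfolding le_supc_iff using rep_abs[of S] rep_abs[of T]
  by (meson les_trans supc_rel_iff)

lemma abs_le: "up_directed S \<Longrightarrow> abs_supc S \<le> q \<longleftrightarrow> les S (rep_supc q)"
  using abs_le_abs[OF _ rep_dir, of S q] Quotient3_abs_rep[OF Quotient3_supc, of q] by simp

lemma abs_eq: "up_directed S \<Longrightarrow> up_directed T \<Longrightarrow> les S T \<Longrightarrow> les T S \<Longrightarrow> abs_supc S = abs_supc T"
  using Quotient3_rel[OF Quotient3_supc, of S T] by (simp add: supc_rel_iff)

lemma supc_antisym: "(p::'a::dc_riesz supc) \<le> q \<Longrightarrow> q \<le> p \<Longrightarrow> p = q"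
  unfolding le_supc_iff using abs_eq[OF rep_dir rep_dir, of p q]
  by (simp add: Quotient3_abs_rep[OF Quotient3_supc])

lemma supc_trans: "(p::'a::dc_riesz supc) \<le> q \<Longrightarrow> q \<le> r \<Longrightarrow> p \<le> r"
  unfolding le_supc_iff by (rule les_trans)

lemma supc_refl: "(p::'a::dc_riesz supc) \<le> p"
  unfolding le_supc_iff by (rule les_refl)

lemma is_sup_unique_supc: "is_sup S (x::'a::dc_riesz supc) \<Longrightarrow> is_sup S y \<Longrightarrow> x = y"
  unfolding is_sup_def by (auto intro: supc_antisym)


lemma inf_sup_dist2: "inf (x::'a::dc_riesz) (sup a b) = sup (inf x a) (inf x b)"
proof -
  have e: "Sup {a, b} = sup a b" using cSup_insert[of "{b}" a] by simp
  have "inf x (Sup {a,b}) = Sup (inf x ` {a,b})" by (rule inf_Sup_dist) auto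
  also have "\<dots> = sup (inf x a) (inf x b)" using cSup_insert[of "{inf x b}" "inf x a"] by simp
  finally show ?thesis unfolding e .
qed

lemma dir_single: "up_directed {a::'a::order}" by (simp add: up_directed_def)

lemma emb_le: "emb a \<le> q \<longleftrightarrow> les {a} (rep_supc q)"
  unfolding emb_def by (rule abs_le[OF dir_single])

lemma up_directed_image2: "(\<And>x y. x \<le> y \<Longrightarrow> f x \<le> f y) \<Longrightarrow> up_directed A \<Longrightarrow> up_directed (f ` A)"
  unfolding up_directed_def by auto blast

lemma emb_mono: "(a::'a::dc_riesz) \<le> b \<Longrightarrow> emb a \<le> emb b"
proof -
  assume ab: "a \<le> b"
  have "les {a} {b}" by (rule les_I) (use ab in \<open>auto intro: le_infI2\<close>)
  then show "emb a \<le> emb b" unfolding emb_def using abs_le_abs[OF dir_single[of a] dir_single[of b]] by simp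
qed

lemma emb_sup: "is_sup (emb ` rep_supc p) p" "up_directed (emb ` rep_supc p)"
proof -
  show "up_directed (emb ` rep_supc p)" by (rule up_directed_image2[OF emb_mono rep_dir])
  show "is_sup (emb ` rep_supc p) p"
    unfolding is_sup_def
  proof (intro conjI ballI allI impI)
    fix s assume "s \<in> emb ` rep_supc p"
    then obtain a where "a \<in> rep_supc p" "s = emb a" by auto
    then show "s \<le> p" using les_subset[of "{a}" "rep_supc p"] emb_le by auto
  next
    fix q assume H: "\<forall>s\<in>emb ` rep_supc p. s \<le> q"
    show "p \<le> q" unfolding le_supc_iff
    proof (rule les_I)
      show "rep_supc p \<noteq> {}" by (rule up_ne[OF rep_dir])
      fix x a assume "a \<in> rep_supc p"
      then have "les {a} (rep_supc q)" using H emb_le by auto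
      then show "inf x a \<le> Sup (inf x ` rep_supc q)" by (rule les_D) simp
    qed
  qed
qed

definition Fx :: "('a::dc_riesz \<Rightarrow> 'b::dc_riesz) \<Rightarrow> 'a supc \<Rightarrow> 'b supc" where
  "Fx f p = abs_supc (f ` rep_supc p)"

lemma rep_abs_les: "up_directed S \<Longrightarrow> les (rep_supc (abs_supc S)) S \<and> les S (rep_supc (abs_supc S))"
  using rep_abs[of S] by (simp add: supc_rel_iff)

context
  fixes f :: "'a::dc_riesz \<Rightarrow> 'b::dc_riesz"
  assumes m: "mono f" and c: "upc f"
begin

lemma F_dir: "up_directed (f ` rep_supc p)" by (rule up_directed_image[OF m rep_dir])

lemma F_emb: "Fx f (emb x) = emb (f x)"
proof -
  have "abs_supc (f ` rep_supc (abs_supc {x})) = abs_supc (f ` {x})"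
    using rep_abs_les[OF dir_single, of x]
    by (intro abs_eq up_directed_image[OF m] rep_dir dir_single les_image[OF m c]) auto
  then show ?thesis by (simp add: Fx_def emb_def)
qed

lemma F_mono: "p \<le> q \<Longrightarrow> Fx f p \<le> Fx f q"
  unfolding Fx_def le_supc_iff[of p q]
  by (subst abs_le_abs[OF F_dir F_dir]) (intro les_image[OF m c rep_dir rep_dir])

lemma F_loc: "left_order_continuous (Fx f)"
  unfolding left_order_continuous_def
proof (intro allI impI, elim conjE)
  fix D and p :: "'a supc"
  assume D: "up_directed D" and Dp: "is_sup D p"
  show "is_sup (Fx f ` D) (Fx f p)"
    unfolding is_sup_def
  proof (intro conjI ballI allI impI)
    fix s assume "s \<in> Fx f ` D"
    then obtain d where "d \<in> D" "s = Fx f d" by auto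
    then show "s \<le> Fx f p" using Dp F_mono unfolding is_sup_def by auto
  next
    fix q assume Hq: "\<forall>s\<in>Fx f ` D. s \<le> q"
    define U where "U = {u. \<exists>d\<in>D. emb u \<le> d}"
    have Udir: "up_directed U"
      unfolding up_directed_def
    proof (intro conjI ballI)
      obtain d where d: "d \<in> D" using up_ne[OF D] by auto
      obtain a where a: "a \<in> rep_supc d" using up_ne[OF rep_dir[of d]] by auto
      have "emb a \<le> d" using a emb_sup(1)[of d] unfolding is_sup_def by auto
      then show "U \<noteq> {}" using d unfolding U_def by auto
    next
      fix u1 u2 assume "u1 \<in> U" "u2 \<in> U"
      then obtain d1 d2 where d: "d1 \<in> D" "emb u1 \<le> d1" "d2 \<in> D" "emb u2 \<le> d2"
        unfolding U_def by auto
      then obtain d3 where d3: "d3 \<in> D" "d1 \<le> d3" "d2 \<le> d3"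
        using D unfolding up_directed_def by blast
      have l1: "les {u1} (rep_supc d3)" using d d3 supc_trans emb_le by metis
      have l2: "les {u2} (rep_supc d3)" using d d3 supc_trans emb_le by metis
      have "les {sup u1 u2} (rep_supc d3)"
      proof (rule les_I)
        fix x a assume "a \<in> {sup u1 u2}"
        then have "inf x a = sup (inf x u1) (inf x u2)" by (simp add: inf_sup_dist2)
        also have "\<dots> \<le> Sup (inf x ` rep_supc d3)"
          using les_D[OF l1, of u1 x] les_D[OF l2, of u2 x] by simp
        finally show "inf x a \<le> Sup (inf x ` rep_supc d3)" .
      qed simp
      then have "sup u1 u2 \<in> U" using d3 unfolding U_def emb_le by auto
      then show "\<exists>c\<in>U. u1 \<le> c \<and> u2 \<le> c" by (meson sup_ge1 sup_ge2)
    qed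
    have "\<forall>d\<in>D. d \<le> abs_supc U"
    proof
      fix d assume d: "d \<in> D"
      have "rep_supc d \<subseteq> U"
      proof
        fix a assume "a \<in> rep_supc d"
        then have "emb a \<le> d" using emb_sup(1)[of d] unfolding is_sup_def by auto
        then show "a \<in> U" using d unfolding U_def by auto
      qed
      then have "les (rep_supc d) U" by (intro les_subset up_ne[OF rep_dir])
      then show "d \<le> abs_supc U"
        using abs_le_abs[OF rep_dir Udir, of d] Quotient3_abs_rep[OF Quotient3_supc, of d] by simp
    qed
    then have "p \<le> abs_supc U" using Dp unfolding is_sup_def by auto
    then have "les (rep_supc p) U"
      using abs_le_abs[OF rep_dir Udir, of p] Quotient3_abs_rep[OF Quotient3_supc, of p] by simp
    then have l1: "les (f ` rep_supc p) (f ` U)" by (rule les_image[OF m c rep_dir Udir])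
    have l2: "les (f ` U) (rep_supc q)"
    proof (rule les_I)
      show "f ` U \<noteq> {}" using up_ne[OF Udir] by simp
      fix x b assume "b \<in> f ` U"
      then obtain u d where u: "b = f u" "d \<in> D" "emb u \<le> d" unfolding U_def by auto
      have "les {u} (rep_supc d)" using u emb_le by auto
      then have "les (f ` {u}) (f ` rep_supc d)" by (rule les_image[OF m c dir_single rep_dir])
      moreover have "les (f ` rep_supc d) (rep_supc q)"
        using Hq u(2) abs_le[OF F_dir] unfolding Fx_def by auto
      ultimately have "les {f u} (rep_supc q)" using les_trans by auto
      then show "inf x b \<le> Sup (inf x ` rep_supc q)" using u(1) by (intro les_D) auto
    qed
    have "les (f ` rep_supc p) (rep_supc q)" by (rule les_trans[OF l1 l2])
    then show "Fx f p \<le> q" unfolding Fx_def using abs_le[OF F_dir] by simp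
  qed
qed

lemma F_unique:
  assumes G1: "\<forall>x. G (emb x) = emb (f x)" and G3: "left_order_continuous G"
  shows "G = Fx f"
proof
  fix p
  have "is_sup (G ` emb ` rep_supc p) (G p)"
    using G3 emb_sup[of p] unfolding left_order_continuous_def by blast
  moreover have "G ` emb ` rep_supc p = Fx f ` emb ` rep_supc p"
    using G1 F_emb by (simp add: image_image)
  moreover have "is_sup (Fx f ` emb ` rep_supc p) (Fx f p)"
    using F_loc emb_sup[of p] unfolding left_order_continuous_def by blast
  ultimately show "G p = Fx f p" using is_sup_unique_supc by metis
qed

lemma supc_ext_eq: "supc_ext f = Fx f"
  unfolding supc_ext_def
proof (rule the_equality)
  show "(\<forall>x. Fx f (emb x) = emb (f x)) \<and> (\<forall>p q. p \<le> q \<longrightarrow> Fx f p \<le> Fx f q) \<and> left_order_continuous (Fx f)"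
    using F_emb F_mono F_loc by blast
qed (use F_unique in blast)

end


lemma oc_upc: "order_continuous f \<Longrightarrow> upc f"
  unfolding order_continuous_def upc_def by blast

lemma upc_comp:
  fixes f :: "'a::order \<Rightarrow> 'b::order" and g :: "'b \<Rightarrow> 'c::order"
  assumes m: "mono f" and cf: "upc f" and cg: "upc g"
  shows "upc (g \<circ> f)"
  unfolding upc_def
proof (intro allI impI, elim conjE)
  fix D :: "'a set" and x assume D: "up_directed D" "is_sup D x"
  then have "is_sup (f ` D) (f x)" using cf unfolding upc_def by blast
  moreover have "up_directed (f ` D)" by (rule up_directed_image[OF m D(1)])
  ultimately have "is_sup (g ` f ` D) (g (f x))" using cg unfolding upc_def by blast
  then show "is_sup ((g \<circ> f) ` D) ((g \<circ> f) x)" by (simp add: image_comp)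
qed

lemma upc_add: "upc (\<lambda>t::'a::dc_riesz. t + b)"
  unfolding upc_def
proof (intro allI impI, elim conjE)
  fix D :: "'a set" and x assume Dx: "is_sup D x"
  show "is_sup ((\<lambda>t. t + b) ` D) (x + b)"
    unfolding is_sup_def
  proof (intro conjI ballI allI impI)
    fix s assume "s \<in> (\<lambda>t. t + b) ` D"
    then show "s \<le> x + b" using Dx unfolding is_sup_def by (auto intro: add_right_mono)
  next
    fix y assume Y: "\<forall>s\<in>(\<lambda>t. t + b) ` D. s \<le> y"
    have "\<forall>s\<in>D. s \<le> y - b" using Y by (auto simp: le_diff_eq)
    then have "x \<le> y - b" using Dx unfolding is_sup_def by blast
    then show "x + b \<le> y" by (simp add: le_diff_eq)
  qed
qed

lemma mono_add: "mono (\<lambda>t::'a::dc_riesz. t + b)"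
  by (rule monoI) (rule add_right_mono)

definition splus :: "'a::dc_riesz set \<Rightarrow> 'a set \<Rightarrow> 'a set" where
  "splus A B = {a + b | a b. a \<in> A \<and> b \<in> B}"

lemma splus_comm: "splus A B = splus B A"
  unfolding splus_def by (auto; metis add.commute)

lemma splus_dir: "up_directed A \<Longrightarrow> up_directed B \<Longrightarrow> up_directed (splus A B)"
proof -
  assume A: "up_directed A" and B: "up_directed B"
  show ?thesis unfolding up_directed_def
  proof (intro conjI ballI)
    show "splus A B \<noteq> {}" using up_ne[OF A] up_ne[OF B] unfolding splus_def by auto
    fix c1 c2 assume "c1 \<in> splus A B" "c2 \<in> splus A B"
    then obtain a1 b1 a2 b2 where c: "c1 = a1 + b1" "c2 = a2 + b2" "a1 \<in> A" "a2 \<in> A" "b1 \<in> B" "b2 \<in> B"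
      unfolding splus_def by auto
    obtain a where a: "a \<in> A" "a1 \<le> a" "a2 \<le> a" using A c unfolding up_directed_def by blast
    obtain b where b: "b \<in> B" "b1 \<le> b" "b2 \<le> b" using B c unfolding up_directed_def by blast
    have "a + b \<in> splus A B" using a b unfolding splus_def by auto
    moreover have "c1 \<le> a + b" "c2 \<le> a + b" using a b c by (auto intro: add_mono)
    ultimately show "\<exists>c\<in>splus A B. c1 \<le> c \<and> c2 \<le> c" by blast
  qed
qed

lemma splus_les1:
  assumes A: "up_directed A" and A': "up_directed A'" and B: "up_directed B" and l: "les A A'"
  shows "les (splus A B) (splus A' B)"
proof (rule les_I)
  show "splus A B \<noteq> {}" using up_ne[OF splus_dir[OF A B]] .
  fix x c assume "c \<in> splus A B"
  then obtain a b where c: "c = a + b" "a \<in> A" "b \<in> B" unfolding splus_def by auto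
  have "inf x (a + b) \<le> Sup (inf x ` (\<lambda>t. t + b) ` A')"
    by (rule lemL[OF mono_add upc_add A' les_elem[OF l c(2) up_ne[OF A']]])
  also have "\<dots> \<le> Sup (inf x ` splus A' B)"
  proof (rule cSUP_subset_mono)
    show "(\<lambda>t. t + b) ` A' \<noteq> {}" using up_ne[OF A'] by simp
    show "bdd_above (inf x ` splus A' B)" by (rule bdd_inf)
    show "(\<lambda>t. t + b) ` A' \<subseteq> splus A' B" using c(3) unfolding splus_def by auto
  qed simp
  finally show "inf x c \<le> Sup (inf x ` splus A' B)" using c(1) by simp
qed

lemma splus_les:
  assumes "up_directed A" "up_directed A'" "up_directed B" "up_directed B'" "les A A'" "les B B'"
  shows "les (splus A B) (splus A' B')"
proof -
  have "les (splus A B) (splus A' B)" using assms by (intro splus_les1)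
  moreover have "les (splus B A') (splus B' A')" using assms by (intro splus_les1)
  ultimately show ?thesis using les_trans splus_comm by metis
qed

theorem propositionP3:
  shows "(\<forall>(f :: 'x::dc_riesz \<Rightarrow> 'y::dc_riesz) g.
            mono f \<and> order_continuous f \<and> mono g \<and> order_continuous g \<and> f \<le> g
            \<longrightarrow> supc_ext f \<le> supc_ext g)
       \<and> (\<forall>(f :: 'x \<Rightarrow> 'y) g h.
            mono f \<and> order_continuous f \<and> mono g \<and> order_continuous g \<and>
            mono h \<and> order_continuous h \<and> h = (\<lambda>x. f x + g x)
            \<longrightarrow> supc_ext h = (\<lambda>p. supc_ext f p + supc_ext g p))
       \<and> (\<forall>(f :: 'x \<Rightarrow> 'y) (g :: 'y \<Rightarrow> 'z::dc_riesz).
            mono f \<and> order_continuous f \<and> mono g \<and> order_continuous g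
            \<longrightarrow> supc_ext (g \<circ> f) = supc_ext g \<circ> supc_ext f)"
proof (intro conjI allI impI; elim conjE)
  fix f g :: "'x \<Rightarrow> 'y"
  assume mf: "mono f" and cf: "order_continuous f" and mg: "mono g" and cg: "order_continuous g"
    and fg: "f \<le> g"
  show "supc_ext f \<le> supc_ext g"
    unfolding supc_ext_eq[OF mf oc_upc[OF cf]] supc_ext_eq[OF mg oc_upc[OF cg]] le_fun_def Fx_def
  proof
    fix p
    show "abs_supc (f ` rep_supc p) \<le> abs_supc (g ` rep_supc p)"
      unfolding abs_le_abs[OF up_directed_image[OF mf rep_dir] up_directed_image[OF mg rep_dir]]
    proof (rule les_I)
      show "f ` rep_supc p \<noteq> {}" using up_ne[OF rep_dir[of p]] by simp
      fix x b assume "b \<in> f ` rep_supc p"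
      then obtain a where a: "a \<in> rep_supc p" "b = f a" by auto
      have "inf x (f a) \<le> inf x (g a)" using fg by (intro inf_mono order_refl) (simp add: le_fun_def)
      also have "\<dots> \<le> Sup (inf x ` g ` rep_supc p)" using a by (intro Sup_inf_upper) auto
      finally show "inf x b \<le> Sup (inf x ` g ` rep_supc p)" using a by simp
    qed
  qed
next
  fix f g h :: "'x \<Rightarrow> 'y"
  assume mf: "mono f" and cf: "order_continuous f" and mg: "mono g" and cg: "order_continuous g"
    and mh: "mono h" and ch: "order_continuous h" and h: "h = (\<lambda>x. f x + g x)"
  show "supc_ext h = (\<lambda>p. supc_ext f p + supc_ext g p)"
    unfolding supc_ext_eq[OF mf oc_upc[OF cf]] supc_ext_eq[OF mg oc_upc[OF cg]]
      supc_ext_eq[OF mh oc_upc[OF ch]]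
  proof
    fix p
    define A :: "'x set" where "A = rep_supc p"
    have dA: "up_directed A" unfolding A_def by (rule rep_dir)
    define Af where "Af = f ` A"
    define Ag where "Ag = g ` A"
    have dAf: "up_directed Af" unfolding Af_def by (rule up_directed_image[OF mf dA])
    have dAg: "up_directed Ag" unfolding Ag_def by (rule up_directed_image[OF mg dA])
    define A1 where "A1 = rep_supc (abs_supc Af)"
    define B1 where "B1 = rep_supc (abs_supc Ag)"
    have dA1: "up_directed A1" and dB1: "up_directed B1" unfolding A1_def B1_def by (rule rep_dir)+
    have l1: "les A1 Af" "les Af A1" using rep_abs_les[OF dAf] unfolding A1_def by auto
    have l2: "les B1 Ag" "les Ag B1" using rep_abs_les[OF dAg] unfolding B1_def by auto
    have s1: "les (splus A1 B1) (splus Af Ag)" "les (splus Af Ag) (splus A1 B1)"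
      using splus_les dA1 dB1 dAf dAg l1 l2 by blast+
    have dh: "up_directed (h ` A)" by (rule up_directed_image[OF mh dA])
    have s2: "les (h ` A) (splus Af Ag)"
      by (rule les_subset) (use up_ne[OF dA] in \<open>auto simp: h splus_def Af_def Ag_def\<close>)
    have s3: "les (splus Af Ag) (h ` A)"
    proof (rule les_I)
      show "splus Af Ag \<noteq> {}" using up_ne[OF splus_dir[OF dAf dAg]] .
      fix x c assume "c \<in> splus Af Ag"
      then obtain a b where c: "c = f a + g b" "a \<in> A" "b \<in> A"
        unfolding splus_def Af_def Ag_def by auto
      obtain d where d: "d \<in> A" "a \<le> d" "b \<le> d" using dA c unfolding up_directed_def by blast
      have "inf x c \<le> inf x (h d)"
        unfolding c h by (intro inf_mono order_refl add_mono monoD[OF mf] monoD[OF mg] d)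
      also have "\<dots> \<le> Sup (inf x ` h ` A)" using d by (intro Sup_inf_upper) auto
      finally show "inf x c \<le> Sup (inf x ` h ` A)" .
    qed
    have "abs_supc (h ` A) = abs_supc (splus A1 B1)"
      by (rule abs_eq[OF dh splus_dir[OF dA1 dB1]])
         (use s1 s2 s3 les_trans in blast)+
    then show "Fx h p = Fx f p + Fx g p"
      unfolding Fx_def plus_supc_def A_def A1_def B1_def Af_def Ag_def splus_def by simp
  qed
next
  fix f :: "'x \<Rightarrow> 'y" and g :: "'y \<Rightarrow> 'z"
  assume mf: "mono f" and cf: "order_continuous f" and mg: "mono g" and cg: "order_continuous g"
  have mgf: "mono (g \<circ> f)" using mf mg by (simp add: mono_def)
  have cgf: "upc (g \<circ> f)" by (rule upc_comp[OF mf oc_upc[OF cf] oc_upc[OF cg]])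
  show "supc_ext (g \<circ> f) = supc_ext g \<circ> supc_ext f"
    unfolding supc_ext_eq[OF mf oc_upc[OF cf]] supc_ext_eq[OF mg oc_upc[OF cg]]
      supc_ext_eq[OF mgf cgf]
  proof
    fix p
    define A :: "'x set" where "A = rep_supc p"
    have dA: "up_directed A" unfolding A_def by (rule rep_dir)
    have dAf: "up_directed (f ` A)" by (rule up_directed_image[OF mf dA])
    have l: "les (rep_supc (abs_supc (f ` A))) (f ` A)" "les (f ` A) (rep_supc (abs_supc (f ` A)))"
      using rep_abs_les[OF dAf] by auto
    have "abs_supc (g ` f ` A) = abs_supc (g ` rep_supc (abs_supc (f ` A)))"
      by (rule abs_eq; (rule up_directed_image[OF mg])?; (rule dAf rep_dir)?;
          rule les_image[OF mg oc_upc[OF cg]]; (rule dAf rep_dir l)?)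
    then show "Fx (g \<circ> f) p = (Fx g \<circ> Fx f) p"
      unfolding Fx_def A_def by (simp add: image_comp)
  qed
qed

end
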